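(* Consider the sampling-based safety filter described in the context at time $t$. Let $\epsilon\in(0,1)$ and $\beta\in(0,1)$, and let the number of samples $N$ satisfy $$N\ge\frac{2}{\epsilon}\left(\ln\frac{1}{\beta}+1\right).$$ If the filter intervenes at time $t$ (i.e. $\mathbf{u}^{\mathrm{safe}}_t\ne\mathbf{u}^{\mathrm{nom}}_t$, meaning $\min_i C(\tau^i_{t+1})\ge0$), then, with probability at least $1-\beta$ over the draw of the $N$ i.i.d. samples, the probability that a control sequence $U_{t+1}\sim\tilde q_{t+1}$ yields a safe trajectory from $\mathbf{x}_{t+1}=f(\mathbf{x}_t,\mathbf{u}^{\mathrm{nom}}_t)$ is at most $\epsilon$: $$\Pr_{U_{t+1}\sim\tilde q_{t+1}}\left(\mathcal{O}_{\tau_{t+1}}=1\right)\le\epsilon.$$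
   Context: Consider a deterministic discrete-time system $\mathbf{x}_{t+1}=f(\mathbf{x}_t,\mathbf{u}_t)$ with states $\mathbf{x}_t\in\mathcal{X}$ and inputs $\mathbf{u}_t\in\mathcal{U}$. Let $l:\mathcal{X}\to\mathbb{R}$ be a level function and $\mathcal{L}=\{\mathbf{x}: l(\mathbf{x})\le 0\}$ the failure set. Fix a horizon $H\ge1$. For a state $\mathbf{x}$ and $U=(\mathbf{u}_0,\dots,\mathbf{u}_{H-1})\in\mathcal{U}^H$, the rollout is $\mathbf{x}^U_0=\mathbf{x}$, $\mathbf{x}^U_{k+1}=f(\mathbf{x}^U_k,\mathbf{u}_k)$, giving trajectory $\tau$. The safety indicator is $\mathcal{O}_\tau=1$ if $\mathbf{x}^U_k\notin\mathcal{L}$ for all $k\in\{0,\dots,H\}$ and $0$ otherwise; the cost is $C(\tau)=\max_{k\in\{0,\dots,H\}}\{-l(\mathbf{x}^U_k)\}$. For $U_{t+1}\in\mathcal{U}^H$, $\tau_{t+1}$ denotes its rollout from $\mathbf{x}_{t+1}=f(\mathbf{x}_t,\mathbf{u}^{\mathrm{nom}}_t)$. Safety filter at time $t$: given the current state $\mathbf{x}_t$, a nominal input $\mathbf{u}^{\mathrm{nom}}_t\in\mathcal{U}$ and a stored sequence $U^{\mathrm{safe}}_t=(\bar{\mathbf{u}}_t,\dots,\bar{\mathbf{u}}_{t+H-1})$, it computes $\mathbf{x}_{t+1}=f(\mathbf{x}_t,\mathbf{u}^{\mathrm{nom}}_t)$, draws $N$ control sequences $U^1_{t+1},\dots,U^N_{t+1}$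 independently from a sampling distribution $\tilde q_{t+1}$ on $\mathcal{U}^H$ (fixed before the draw), rolls each out from $\mathbf{x}_{t+1}$ to get $\tau^i_{t+1}$, and lets $i^*\in\arg\min_i C(\tau^i_{t+1})$. If $C(\tau^{i^*}_{t+1})<0$ it outputs $\mathbf{u}^{\mathrm{safe}}_t=\mathbf{u}^{\mathrm{nom}}_t$ and stores $U^{i^*}_{t+1}$; otherwise the filter intervenes, outputting $\mathbf{u}^{\mathrm{safe}}_t=\bar{\mathbf{u}}_t$ and storing the shifted sequence $(\bar{\mathbf{u}}_{t+1},\dots,\bar{\mathbf{u}}_{t+H-1},\mathbf{u}')$ for some appended input $\mathbf{u}'$. The notation $\mathbf{u}^{\mathrm{safe}}_t\ne\mathbf{u}^{\mathrm{nom}}_t$ means the filter intervenes. *)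

theory Defs
  imports "HOL-Probability.Probability"
begin

text \<open>Control sequences U = (u_0,...,u_{H-1}) are represented as functions
  nat => 'u; only the entries U 0, ..., U (H-1) are used by a rollout.\<close>

primrec rollout :: "('x \<Rightarrow> 'u \<Rightarrow> 'x) \<Rightarrow> 'x \<Rightarrow> (nat \<Rightarrow> 'u) \<Rightarrow> nat \<Rightarrow> 'x" where
  "rollout f x U 0 = x"
| "rollout f x U (Suc k) = f (rollout f x U k) (U k)"

definition safety_indicator :: "('x \<Rightarrow> 'u \<Rightarrow> 'x) \<Rightarrow> ('x \<Rightarrow> real) \<Rightarrow> nat \<Rightarrow> 'x \<Rightarrow> (nat \<Rightarrow> 'u) \<Rightarrow> nat" where
  "safety_indicator f l H x U =
     (if (\<forall>k\<in>{0..H}. rollout f x U k \<notin> {y. l y \<le> 0}) then 1 else 0)"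

definition traj_cost :: "('x \<Rightarrow> 'u \<Rightarrow> 'x) \<Rightarrow> ('x \<Rightarrow> real) \<Rightarrow> nat \<Rightarrow> 'x \<Rightarrow> (nat \<Rightarrow> 'u) \<Rightarrow> real" where
  "traj_cost f l H x U = Max ((\<lambda>k. - l (rollout f x U k)) ` {0..H})"

definition filter_intervenes ::
  "('x \<Rightarrow> 'u \<Rightarrow> 'x) \<Rightarrow> ('x \<Rightarrow> real) \<Rightarrow> nat \<Rightarrow> nat \<Rightarrow> 'x \<Rightarrow> 'u \<Rightarrow> (nat \<Rightarrow> nat \<Rightarrow> 'u) \<Rightarrow> bool" where
  "filter_intervenes f l H N xt unom Us =
     (Min ((\<lambda>i. traj_cost f l H (f xt unom) (Us i)) ` {..<N}) \<ge> 0)"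

end

theory Submission
  imports Defs
begin

lemma cost_neg_iff:
  "traj_cost f l H x U < 0 \<longleftrightarrow> safety_indicator f l H x U = 1"
proof -
  have fin: "finite ((\<lambda>k. - l (rollout f x U k)) ` {0..H})" "((\<lambda>k. - l (rollout f x U k)) ` {0..H}) \<noteq> {}"
    by auto
  show ?thesis
    unfolding traj_cost_def safety_indicator_def
    using Max_less_iff[OF fin] by (auto simp: not_less)
qed

lemma intervenes_iff:
  assumes "N > 0"
  shows "filter_intervenes f l H N xt unom Us \<longleftrightarrow>
     (\<forall>i<N. safety_indicator f l H (f xt unom) (Us i) \<noteq> 1)"
proof -
  have fin: "finite ((\<lambda>i. traj_cost f l H (f xt unom) (Us i)) ` {..<N})"
     "((\<lambda>i. traj_cost f l H (f xt unom) (Us i)) ` {..<N}) \<noteq> {}" using assms by auto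
  show ?thesis unfolding filter_intervenes_def
    using Min_ge_iff[OF fin, of 0] cost_neg_iff[of f l H "f xt unom"]
    by (auto simp: not_less[symmetric])
qed

theorem theorem1:
  fixes f :: "'x \<Rightarrow> 'u \<Rightarrow> 'x" and l :: "'x \<Rightarrow> real"
    and H N :: nat and xt :: 'x and unom :: 'u
    and q :: "(nat \<Rightarrow> 'u) measure" and \<epsilon> \<beta> :: real
  assumes "H \<ge> 1"
    and "prob_space q"
    and "\<epsilon> \<in> {0<..<1}" and "\<beta> \<in> {0<..<1}"
    and "real N \<ge> 2 / \<epsilon> * (ln (1 / \<beta>) + 1)"
    and "{U \<in> space q. safety_indicator f l H (f xt unom) U = 1} \<in> sets q"
  shows "measure (PiM {..<N} (\<lambda>_. q))
           {Us \<in> space (PiM {..<N} (\<lambda>_. q)).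
              filter_intervenes f l H N xt unom Us \<longrightarrow>
              measure q {U \<in> space q. safety_indicator f l H (f xt unom) U = 1} \<le> \<epsilon>}
         \<ge> 1 - \<beta>"
proof -
  define S where "S = {U \<in> space q. safety_indicator f l H (f xt unom) U = 1}"
  define P where "P = PiM {..<N} (\<lambda>_. q)"
  define p where "p = measure q S"
  have eps: "0 < \<epsilon>" "\<epsilon> < 1" and bet: "0 < \<beta>" "\<beta> < 1" using assms(3,4) by auto
  interpret Q: prob_space q by (rule assms(2))
  interpret FP: finite_product_prob_space "\<lambda>_. q" "{..<N}"
    by unfold_locales (auto simp: assms(2) Q.sigma_finite_measure_axioms)
  have Sm: "S \<in> sets q" using assms(6) by (simp add: S_def)
  have lnpos: "ln (1/\<beta>) > 0" using bet by simp
  have "2 / \<epsilon> * (ln (1 / \<beta>) + 1) > 0" using eps lnpos by simp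
  hence Npos: "N > 0" using assms(5) by (cases N) auto
  show ?thesis
  proof (cases "p \<le> \<epsilon>")
    case True
    have "{Us \<in> space P. filter_intervenes f l H N xt unom Us \<longrightarrow> p \<le> \<epsilon>} = space P" using True by auto
    moreover have "prob_space P" unfolding P_def by (rule prob_space_PiM) (simp add: assms(2))
    ultimately show ?thesis using bet unfolding P_def[symmetric] S_def[symmetric] p_def[symmetric] by (simp add: prob_space.prob_space)
  next
    case False
    define A where "A = PiE {..<N} (\<lambda>_. space q - S)"
    have Am: "A \<in> sets P" unfolding A_def P_def using Sm by (intro sets_PiM_I_finite) auto
    have E: "{Us \<in> space P. filter_intervenes f l H N xt unom Us \<longrightarrow> p \<le> \<epsilon>} = space P - A"
    proof -
      have "\<And>Us. Us \<in> space P \<Longrightarrow> (filter_intervenes f l H N xt unom Us \<longleftrightarrow> Us \<in> A)"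
        unfolding A_def P_def S_def
        by (auto simp: intervenes_iff[OF Npos] space_PiM PiE_iff)
      thus ?thesis using False by blast
    qed
    have "measure P A = (\<Prod>i\<in>{..<N}. measure q (space q - S))"
      unfolding A_def P_def using Sm by (intro FP.prob_times) auto
    also have "\<dots> = (1 - p)^N" using Sm by (simp add: Q.prob_compl p_def)
    finally have mA: "measure P A = (1-p)^N" .
    have "(1-p)^N \<le> (1-\<epsilon>)^N" using False Q.prob_le_1[of S] unfolding p_def
      by (intro power_mono) auto
    also have "\<dots> \<le> exp (-\<epsilon>)^N" using eps
      by (intro power_mono) (auto simp: exp_ge_add_one_self[of "-\<epsilon>", simplified])
    also have "\<dots> = exp (- (\<epsilon> * real N))" by (simp add: exp_of_nat_mult[symmetric])
    also have "\<dots> \<le> exp (ln \<beta>)"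
    proof -
      have "\<epsilon> * real N \<ge> \<epsilon> * (2 / \<epsilon> * (ln (1 / \<beta>) + 1))"
        using assms(5) eps by (intro mult_left_mono) auto
      also have "\<epsilon> * (2 / \<epsilon> * (ln (1 / \<beta>) + 1)) = 2 * (ln (1/\<beta>) + 1)" using eps by simp
      finally have "\<epsilon> * real N \<ge> 2 * (ln (1/\<beta>) + 1)" .
      moreover have "ln (1/\<beta>) = - ln \<beta>" using bet by (simp add: ln_div)
      ultimately have "- (\<epsilon> * real N) \<le> ln \<beta>" using lnpos by (smt (verit))
      thus ?thesis by simp
    qed
    also have "\<dots> = \<beta>" using bet by simp
    finally have "measure P A \<le> \<beta>" using mA by simp
    moreover have "measure P (space P - A) = 1 - measure P A"
      using Am unfolding P_def by (simp add: FP.prob_compl)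
    ultimately show ?thesis using E unfolding P_def p_def S_def by simp
  qed
qed

end
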